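(* Let $r>1$ and let $N\ge1$, $K\ge2$ be integers. Let $\gamma^*(r,K,N)$ be the supremum of $$\sum_{i=1}^{K-1}\frac{z^i}{\sum_{j=i}^Kp^j}$$ over all $p=(p^1,\dots,p^K)$ with $p^K=1/r$, $\sum_{i=1}^Kp^i=1$, $p^i>0$ for all $i$, where $z^i=(\sum_{j=1}^ip^j)^N-(\sum_{j=1}^{i-1}p^j)^N$. Then $$\eta(r,K,N)=\frac{\gamma^*(r,K,N)}{\frac{r^N-(r-1)^N}{r^{N-1}}+\gamma^*(r,K,N)}.$$
   Context: Single item auction with $N$ buyers whose values are i.i.d., each taking values $0<x^1<\dots<x^K$ with probabilities $p^i>0$, $\sum_ip^i=1$. With $z^i$ as in the claim (the probability that the maximum value equals $x^i$) and reserve index $t(x,p)=\max\{i: i\in\arg\max_{1\le k\le K}x^k\sum_{j=k}^Kp^j\}$, the efficiency loss ratio of the welfare-maximizing revenue-optimal auction (which sells to the highest bidder if that bid is at least the common reserve price $x^{t}$) is $$\mathrm{ELR}_N(x,p)=\frac{\sum_{i=1}^{t(x,p)-1}z^ix^i}{\sum_{i=1}^Kz^ix^i}.$$ The worst case ELR $\eta(r,K,N)$ is the supremum of $\mathrm{ELR}_N(x,p)$ over all $p$ with $p^i>0$, $\sum_ip^i=1$, and all $x$ with $0<x^1<\dots<x^K\le rx^1$. *)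

theory Defs
  imports Complex_Main
begin

text \<open>Values x and probabilities p are indexed 1..K (functions nat => real; values
outside 1..K are irrelevant).\<close>

definition zprob :: "nat \<Rightarrow> (nat \<Rightarrow> real) \<Rightarrow> nat \<Rightarrow> real" where
  "zprob N p i = (\<Sum>j=1..i. p j) ^ N - (\<Sum>j=1..<i. p j) ^ N"

definition revenue :: "nat \<Rightarrow> (nat \<Rightarrow> real) \<Rightarrow> (nat \<Rightarrow> real) \<Rightarrow> nat \<Rightarrow> real" where
  "revenue K x p k = x k * (\<Sum>j=k..K. p j)"

definition reserve_index :: "nat \<Rightarrow> (nat \<Rightarrow> real) \<Rightarrow> (nat \<Rightarrow> real) \<Rightarrow> nat" where
  "reserve_index K x p =
     Max {i \<in> {1..K}. \<forall>k\<in>{1..K}. revenue K x p k \<le> revenue K x p i}"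

definition ELR :: "nat \<Rightarrow> nat \<Rightarrow> (nat \<Rightarrow> real) \<Rightarrow> (nat \<Rightarrow> real) \<Rightarrow> real" where
  "ELR N K x p =
     (\<Sum>i=1..<reserve_index K x p. zprob N p i * x i) / (\<Sum>i=1..K. zprob N p i * x i)"

definition valid_prob :: "nat \<Rightarrow> (nat \<Rightarrow> real) \<Rightarrow> bool" where
  "valid_prob K p \<longleftrightarrow> (\<forall>i\<in>{1..K}. p i > 0) \<and> (\<Sum>i=1..K. p i) = 1"

definition valid_vals :: "real \<Rightarrow> nat \<Rightarrow> (nat \<Rightarrow> real) \<Rightarrow> bool" where
  "valid_vals r K x \<longleftrightarrow> 0 < x 1 \<and> (\<forall>i\<in>{1..<K}. x i < x (Suc i)) \<and> x K \<le> r * x 1"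

definition eta :: "real \<Rightarrow> nat \<Rightarrow> nat \<Rightarrow> real" where
  "eta r K N = Sup {ELR N K x p | x p. valid_prob K p \<and> valid_vals r K x}"

definition gamma_star :: "real \<Rightarrow> nat \<Rightarrow> nat \<Rightarrow> real" where
  "gamma_star r K N = Sup {(\<Sum>i=1..K-1. zprob N p i / (\<Sum>j=i..K. p j)) | p.
      valid_prob K p \<and> p K = 1 / r}"

end

theory Submission imports Defs begin

definition Lm :: "(nat \<Rightarrow> real) \<Rightarrow> nat \<Rightarrow> real" where
  "Lm p i = (\<Sum>j=1..<i. p j)"

definition Gs :: "nat \<Rightarrow> nat \<Rightarrow> (nat \<Rightarrow> real) \<Rightarrow> nat \<Rightarrow> real" where
  "Gs N K p n = (\<Sum>i=1..<n. zprob N p i / (\<Sum>j=i..K. p j))"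

lemma zprob_Lm: "zprob N p i = Lm p (Suc i) ^ N - Lm p i ^ N"
  unfolding zprob_def Lm_def by (simp add: atLeastLessThanSuc_atLeastAtMost)

lemma Lm_Suc: "i \<ge> 1 \<Longrightarrow> Lm p (Suc i) = Lm p i + p i"
  unfolding Lm_def by (simp add: sum.atLeastLessThan_Suc)

lemma Lm_0: "Lm p 0 = 0" and Lm_1: "Lm p (Suc 0) = 0" unfolding Lm_def by auto

lemma Lm_split: assumes "1 \<le> i" "i \<le> j"
  shows "Lm p j = Lm p i + (\<Sum>k=i..<j. p k)"
proof -
  have "{1..<j} = {1..<i} \<union> {i..<j}" using assms by auto
  then show ?thesis unfolding Lm_def
      by (simp add: sum.union_disjoint ivl_disj_int)
qed

lemma Lm_mono: assumes "valid_prob K p" "i \<le> j" "j \<le> Suc K"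
  shows "Lm p i \<le> Lm p j"
proof -
  have key: "Lm p i' \<le> Lm p j" if "1 \<le> i'" "i' \<le> j" for i'
  proof -
    have "(\<Sum>k=i'..<j. p k) \<ge> 0" using assms that unfolding valid_prob_def
      by (intro sum_nonneg) (auto intro: less_imp_le)
    then show ?thesis using Lm_split[OF that, of p] by linarith
  qed
  show ?thesis
  proof (cases "i \<ge> 1")
    case True then show ?thesis using key assms by auto
  next
    case False
    then have "i = 0" by simp
    then show ?thesis using key[of 1] Lm_0 Lm_1 assms by (cases j) auto
  qed
qed

lemma Lm_nonneg: "valid_prob K p \<Longrightarrow> j \<le> Suc K \<Longrightarrow> Lm p j \<ge> 0"
  using Lm_mono[of K p 0 j] Lm_0 by simp

lemma Lm_top: "valid_prob K p \<Longrightarrow> Lm p (Suc K) = 1"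
  unfolding Lm_def valid_prob_def by (simp add: atLeastLessThanSuc_atLeastAtMost)

lemma tail_eq: assumes "valid_prob K p" "1 \<le> i" "i \<le> Suc K"
  shows "(\<Sum>j=i..K. p j) = 1 - Lm p i"
proof -
  have "Lm p (Suc K) = Lm p i + (\<Sum>k=i..<Suc K. p k)" using Lm_split assms by blast
  then show ?thesis using Lm_top[OF assms(1)] by (simp add: atLeastLessThanSuc_atLeastAtMost)
qed

lemma tail_pos: assumes "valid_prob K p" "1 \<le> i" "i \<le> K"
  shows "(\<Sum>j=i..K. p j) > 0"
  using assms unfolding valid_prob_def
  by (intro sum_pos) auto

lemma zprob_nonneg: assumes "valid_prob K p" "i \<le> K"
  shows "zprob N p i \<ge> 0"
  unfolding zprob_Lm using Lm_mono[OF assms(1), of i "Suc i"] Lm_nonneg[OF assms(1), of i] assms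
  by (simp add: power_mono)

lemma zprob_tele: assumes "a \<le> b"
  shows "(\<Sum>i=a..<b. zprob N p i) = Lm p b ^ N - Lm p a ^ N"
  unfolding zprob_Lm using sum_Suc_diff'[OF assms, of "\<lambda>i. Lm p i ^ N"] by simp

lemma psi_ineq:
  fixes w w' :: real
  assumes "0 \<le> w" "w \<le> w'" "w' < 1"
  shows "(1 - w'^N) * (1-w) * w^N \<le> (1-w') * (1 - w^N) * w'^N"
proof -
  have t: "w'^k * w^N \<le> w^k * w'^N" if "k < N" for k
  proof -
    have "w'^k * w^N = w'^k * w^k * w^(N-k)" using that by (simp add: power_add[symmetric])
    also have "\<dots> \<le> w'^k * w^k * w'^(N-k)"
      using assms by (intro mult_left_mono power_mono) auto
    also have "\<dots> = w^k * w'^N" using that by (simp add: power_add[symmetric] mult_ac)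
    finally show ?thesis .
  qed
  have "(\<Sum>k<N. w'^k * w^N) \<le> (\<Sum>k<N. w^k * w'^N)" using t by (intro sum_mono) auto
  then have "(\<Sum>k<N. w'^k) * w^N \<le> (\<Sum>k<N. w^k) * w'^N" by (simp add: sum_distrib_right)
  then have "((1-w')*(1-w)) * ((\<Sum>k<N. w'^k) * w^N) \<le> ((1-w')*(1-w)) * ((\<Sum>k<N. w^k) * w'^N)"
    using assms by (intro mult_left_mono) auto
  then show ?thesis unfolding one_diff_power_eq[of w' N] one_diff_power_eq[of w N]
    by (simp add: mult_ac)
qed

lemma reserve_props: assumes "K \<ge> 1"
  shows "reserve_index K x p \<in> {1..K} \<and>
    (\<forall>k\<in>{1..K}. revenue K x p k \<le> revenue K x p (reserve_index K x p))"
proof -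
  let ?S = "{i \<in> {1..K}. \<forall>k\<in>{1..K}. revenue K x p k \<le> revenue K x p i}"
  have fin: "finite (revenue K x p ` {1..K})" by simp
  have ne: "revenue K x p ` {1..K} \<noteq> {}" using assms by auto
  obtain i0 where i0: "i0 \<in> {1..K}" "revenue K x p i0 = Max (revenue K x p ` {1..K})"
    using Max_in[OF fin ne] by auto
  have "i0 \<in> ?S" using i0 fin by auto
  then have "?S \<noteq> {}" by blast
  moreover have "finite ?S" by simp
  ultimately have "Max ?S \<in> ?S" by (rule Max_in[rotated])
  then show ?thesis unfolding reserve_index_def by blast
qed

lemma x_mono: assumes "valid_vals r K x" "1 \<le> i" "i \<le> j" "j \<le> K"
  shows "x i \<le> x j"
  using assms(3,4)
proof (induction j)
  case 0 then show ?case by simp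
next
  case (Suc j)
  show ?case
  proof (cases "i = Suc j")
    case True then show ?thesis by simp
  next
    case False
    then have "i \<le> j" using Suc by simp
    then have "x i \<le> x j" using Suc by simp
    moreover have "x j < x (Suc j)" using assms(1,2) Suc.prems \<open>i \<le> j\<close>
      unfolding valid_vals_def by auto
    ultimately show ?thesis by simp
  qed
qed

lemma frac_mono4:
  fixes A A' B B' :: real
  assumes "0 \<le> A" "A \<le> A'" "0 < B'" "B' \<le> B"
  shows "A/(A+B) \<le> A'/(A'+B')"
proof -
  have "A * B' \<le> A' * B" using assms by (intro mult_mono) auto
  then have "A * (A'+B') \<le> A' * (A+B)" by (simp add: algebra_simps)
  then show ?thesis using assms by (simp add: divide_simps)
qed

lemma upper_B:
  assumes vp: "valid_prob K p" and vv: "valid_vals r K x" and r: "r > 1" and N: "N \<ge> 1"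
    and K: "K \<ge> 2"
  defines "t \<equiv> reserve_index K x p"
  defines "s \<equiv> (\<Sum>j=t..K. p j)"
  shows "1 \<le> t \<and> t \<le> K \<and> 1/r \<le> s \<and> s \<le> 1 \<and> s = 1 - Lm p t \<and> Gs N K p t \<ge> 0 \<and>
     ELR N K x p \<le> s * Gs N K p t / (s * Gs N K p t + (1 - (1-s)^N))"
proof -
  have tK: "t \<in> {1..K}" and rmax: "\<forall>k\<in>{1..K}. revenue K x p k \<le> revenue K x p t"
    using reserve_props[of K x p] K unfolding t_def by auto
  have s_pos: "s > 0" using tail_pos[OF vp] tK unfolding s_def by auto
  have s_eq: "s = 1 - Lm p t" using tail_eq[OF vp] tK unfolding s_def by auto
  have Lt: "Lm p t \<ge> 0" using Lm_nonneg[OF vp] tK by auto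
  have x1: "x 1 > 0" using vv unfolding valid_vals_def by auto
  have xt: "x t \<ge> x 1" using x_mono[OF vv] tK by auto
  have xK: "x t \<le> x K" using x_mono[OF vv] tK by auto
  have xKr: "x K \<le> r * x 1" using vv unfolding valid_vals_def by auto
  have T1: "(\<Sum>j=1..K. p j) = 1" using vp unfolding valid_prob_def by auto
  have "revenue K x p 1 \<le> revenue K x p t" using rmax K by auto
  then have "x 1 \<le> x t * s" unfolding revenue_def s_def using T1 by simp
  also have "\<dots> \<le> r * x 1 * s" using xK xKr s_pos by (intro mult_right_mono) auto
  finally have "1 \<le> r * s" using x1 by (simp add: mult_ac)
  then have s_ge: "1/r \<le> s" using r by (simp add: divide_simps mult_ac)
  have Gnn: "Gs N K p t \<ge> 0" unfolding Gs_def
    using tK by (intro sum_nonneg divide_nonneg_pos zprob_nonneg[OF vp] tail_pos[OF vp]) auto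
  define A where "A = (\<Sum>i=1..<t. zprob N p i * x i)"
  define B where "B = (\<Sum>i=t..K. zprob N p i * x i)"
  have split: "(\<Sum>i=1..K. zprob N p i * x i) = A + B"
  proof -
    have "{1..K} = {1..<t} \<union> {t..K}" using tK by auto
    then show ?thesis unfolding A_def B_def by (simp add: sum.union_disjoint ivl_disj_int)
  qed
  have A0: "A \<ge> 0" unfolding A_def using tK x1 x_mono[OF vv]
    by (intro sum_nonneg mult_nonneg_nonneg zprob_nonneg[OF vp]) (auto intro: order.trans[of 0 "x 1"])
  have "A \<le> (\<Sum>i=1..<t. zprob N p i * (x t * s / (\<Sum>j=i..K. p j)))" unfolding A_def
  proof (intro sum_mono mult_left_mono)
    fix i assume i: "i \<in> {1..<t}"
    have Tp: "(\<Sum>j=i..K. p j) > 0" using tail_pos[OF vp] i tK by auto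
    have "revenue K x p i \<le> revenue K x p t" using rmax i tK by auto
    then have "x i * (\<Sum>j=i..K. p j) \<le> x t * s" unfolding revenue_def s_def by simp
    then show "x i \<le> x t * s / (\<Sum>j=i..K. p j)" using Tp by (simp add: divide_simps)
    show "zprob N p i \<ge> 0" using zprob_nonneg[OF vp] i tK by auto
  qed
  also have "\<dots> = x t * s * Gs N K p t" unfolding Gs_def sum_distrib_left
    by (intro sum.cong) auto
  finally have Ale: "A \<le> x t * s * Gs N K p t" .
  have "B \<ge> (\<Sum>i=t..K. zprob N p i * x t)" unfolding B_def
  proof (intro sum_mono mult_left_mono)
    fix i assume i: "i \<in> {t..K}"
    show "x t \<le> x i" using x_mono[OF vv] i tK by auto
    show "zprob N p i \<ge> 0" using zprob_nonneg[OF vp] i tK by auto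
  qed
  also have "(\<Sum>i=t..K. zprob N p i * x t) = x t * (1 - (1-s)^N)"
  proof -
    have "(\<Sum>i=t..K. zprob N p i) = (\<Sum>i=t..<Suc K. zprob N p i)"
      by (simp add: atLeastLessThanSuc_atLeastAtMost)
    also have "\<dots> = 1 - (1-s)^N" using zprob_tele[of t "Suc K" N p] tK Lm_top[OF vp] s_eq by simp
    finally show ?thesis by (simp add: sum_distrib_left[symmetric] mult_ac)
  qed
  finally have Bge: "B \<ge> x t * (1 - (1-s)^N)" .
  have D: "1 - (1-s)^N > 0"
  proof -
    have "(1-s)^N \<le> (1-s)^1" using N s_pos Lt s_eq by (intro power_decreasing) auto
    then show ?thesis using s_pos by simp
  qed
  have xtp: "x t > 0" using x1 xt by simp
  have "ELR N K x p = A/(A+B)" unfolding ELR_def split A_def t_def by simp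
  also have "\<dots> \<le> (x t * s * Gs N K p t) / (x t * s * Gs N K p t + x t * (1 - (1-s)^N))"
    using A0 Ale Bge D xtp by (intro frac_mono4) auto
  also have "\<dots> = s * Gs N K p t / (s * Gs N K p t + (1 - (1-s)^N))"
  proof -
    have "x t * s * Gs N K p t + x t * (1 - (1-s)^N) = x t * (s * Gs N K p t + (1 - (1-s)^N))"
      by (simp add: algebra_simps)
    then show ?thesis using xtp by (simp add: mult.assoc)
  qed
  finally show ?thesis using tK s_ge s_eq Lt Gnn by auto
qed

lemma construct:
  assumes vp: "valid_prob K p" and t: "2 \<le> t" "t \<le> K" and u: "0 < u" "u \<le> s" and s1: "s < 1"
    and seq: "s = 1 - Lm p t" and N: "N \<ge> 1"
  defines "m \<equiv> K - t"
  defines "lam \<equiv> (1-u)/(1-s)"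
  defines "q \<equiv> (\<lambda>j. if j \<le> Suc m then lam * p 1 / real (Suc m) else if j < K then lam * p (j - m) else u)"
  shows "valid_prob K q \<and> q K = u \<and> Gs N K q K \<ge> lam^N * Gs N K p t"
proof -
  have Km: "K = t + m" using t unfolding m_def by simp
  have lam1: "lam \<ge> 1" using u s1 unfolding lam_def by (simp add: divide_simps)
  have p1: "p 1 > 0" using vp t unfolding valid_prob_def by auto
  have L1: "Lm q i = real (i - 1) * (lam * p 1 / real (Suc m))" if "i \<le> Suc (Suc m)" for i
    using that
  proof (induction i)
    case 0 then show ?case by (simp add: Lm_0)
  next
    case (Suc i)
    show ?case
    proof (cases i)
      case 0 then show ?thesis by (simp add: Lm_1)
    next
      case (Suc i')
      then have "Lm q (Suc i) = Lm q i + q i" using Lm_Suc by simp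
      also have "q i = lam * p 1 / real (Suc m)" using Suc.prems unfolding q_def by simp
      finally show ?thesis using Suc.IH Suc.prems \<open>i = Suc i'\<close> by (simp add: algebra_simps add_divide_distrib)
    qed
  qed
  have L2: "Lm q i = lam * Lm p (i - m)" if "Suc (Suc m) \<le> i" "i \<le> K" for i
    using that
  proof (induction i rule: dec_induct)
    case base
    have "Lm p 2 = p 1" using Lm_Suc[of 1 p] Lm_1 by (simp add: numeral_2_eq_2)
    then show ?case using L1[of "Suc (Suc m)"] by (simp add: numeral_2_eq_2 Suc_diff_le)
  next
    case (step n)
    have "Lm q (Suc n) = Lm q n + q n" using Lm_Suc step by simp
    also have "q n = lam * p (n - m)" using step unfolding q_def by simp
    also have "Lm p (Suc n - m) = Lm p (n - m) + p (n - m)"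
      using Lm_Suc[of "n - m" p] step by (simp add: Suc_diff_le)
    ultimately show ?case using step by (simp add: algebra_simps)
  qed
  have qK: "q K = u" using Km t unfolding q_def by simp
  have LqK: "Lm q K = lam * (1 - s)" using L2[of K] Km t seq by simp
  have lam_s: "lam * (1 - s) = 1 - u" unfolding lam_def using s1 by simp
  have qtop: "Lm q (Suc K) = 1" using Lm_Suc[of K q] LqK qK lam_s t by simp
  have qpos: "q j > 0" if "j \<in> {1..K}" for j
  proof -
    have "p (j - m) > 0" if "j - m \<ge> 1" using vp that \<open>j \<in> {1..K}\<close> unfolding valid_prob_def by auto
    then show ?thesis using that lam1 p1 u unfolding q_def by auto
  qed
  have vq: "valid_prob K q" unfolding valid_prob_def
    using qpos qtop unfolding Lm_def by (simp add: atLeastLessThanSuc_atLeastAtMost)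
  have Tq: "(\<Sum>j=i..K. q j) = 1 - Lm q i" if "1 \<le> i" "i \<le> K" for i using tail_eq[OF vq] that by simp
  have Tqp: "(\<Sum>j=i..K. q j) > 0" if "1 \<le> i" "i \<le> K" for i using tail_pos[OF vq] that by simp
  have B1: "(\<Sum>i=1..<Suc (Suc m). zprob N q i / (\<Sum>j=i..K. q j)) \<ge> lam^N * p 1 ^ N"
  proof -
    have "(\<Sum>i=1..<Suc (Suc m). zprob N q i / (\<Sum>j=i..K. q j)) \<ge> (\<Sum>i=1..<Suc (Suc m). zprob N q i)"
    proof (intro sum_mono)
      fix i assume i: "i \<in> {1..<Suc (Suc m)}"
      then have iK: "1 \<le> i" "i \<le> K" using Km t by auto
      have z0: "zprob N q i \<ge> 0" using zprob_nonneg[OF vq] iK by simp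
      have T1: "(\<Sum>j=i..K. q j) \<le> 1" using Tq[OF iK] Lm_nonneg[OF vq, of i] iK by simp
      show "zprob N q i \<le> zprob N q i / (\<Sum>j=i..K. q j)"
        using z0 T1 Tqp[OF iK] by (simp add: divide_simps mult_left_le)
    qed
    also have "(\<Sum>i=1..<Suc (Suc m). zprob N q i) = Lm q (Suc (Suc m)) ^ N - Lm q 1 ^ N"
      by (rule zprob_tele) simp
    also have "\<dots> = (lam * p 1) ^ N" using L1[of "Suc (Suc m)"] Lm_1[of q] N by simp
    finally show ?thesis by (simp add: power_mult_distrib)
  qed
  have B2: "(\<Sum>i=Suc (Suc m)..<K. zprob N q i / (\<Sum>j=i..K. q j)) \<ge>
            lam^N * (\<Sum>k=2..<t. zprob N p k / (\<Sum>j=k..K. p j))"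
  proof -
    have "(\<Sum>i=Suc (Suc m)..<K. zprob N q i / (\<Sum>j=i..K. q j)) =
          (\<Sum>k=2..<t. zprob N q (m + k) / (\<Sum>j=(m+k)..K. q j))"
      using sum.atLeastLessThan_shift_bounds[of "\<lambda>i. zprob N q i / (\<Sum>j=i..K. q j)" 2 m t] Km
      by (simp add: numeral_2_eq_2 add.commute comp_def)
    also have "\<dots> \<ge> (\<Sum>k=2..<t. lam^N * (zprob N p k / (\<Sum>j=k..K. p j)))"
    proof (intro sum_mono)
      fix k assume k: "k \<in> {2..<t}"
      have iK: "1 \<le> m + k" "m + k \<le> K" using k Km by auto
      have kK: "1 \<le> k" "k \<le> K" using k t by auto
      have zq: "zprob N q (m+k) = lam^N * zprob N p k"
        unfolding zprob_Lm using L2[of "Suc (m+k)"] L2[of "m+k"] k Km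
        by (simp add: power_mult_distrib algebra_simps)
      have z0: "zprob N p k \<ge> 0" using zprob_nonneg[OF vp] kK by simp
      have Tk: "(\<Sum>j=k..K. p j) = 1 - Lm p k" using tail_eq[OF vp] kK by simp
      have Tmk: "(\<Sum>j=(m+k)..K. q j) = 1 - lam * Lm p k" using Tq[OF iK] L2[of "m+k"] k Km by simp
      have Lk: "Lm p k \<ge> 0" using Lm_nonneg[OF vp] kK by simp
      have "(\<Sum>j=(m+k)..K. q j) \<le> (\<Sum>j=k..K. p j)" unfolding Tk Tmk using lam1 Lk
        by (simp add: mult_left_le_one_le mult_right_mono) (metis mult_left_mono mult_1 mult.commute)
      then have dd: "zprob N p k / (\<Sum>j=k..K. p j) \<le> zprob N p k / (\<Sum>j=(m+k)..K. q j)"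
        using z0 Tqp[OF iK] by (intro divide_left_mono) auto
      then show "lam^N * (zprob N p k / (\<Sum>j=k..K. p j)) \<le> zprob N q (m + k) / (\<Sum>j=(m+k)..K. q j)"
        unfolding zq using mult_left_mono[OF dd, of "lam^N"] lam1 by simp
    qed
    finally show ?thesis by (simp add: sum_distrib_left)
  qed
  have GqK: "Gs N K q K = (\<Sum>i=1..<Suc (Suc m). zprob N q i / (\<Sum>j=i..K. q j)) +
            (\<Sum>i=Suc (Suc m)..<K. zprob N q i / (\<Sum>j=i..K. q j))"
  proof -
    have "{1..<K} = {1..<Suc (Suc m)} \<union> {Suc (Suc m)..<K}" using Km t by auto
    then show ?thesis unfolding Gs_def by (simp add: sum.union_disjoint ivl_disj_int)
  qed
  have Gpt: "Gs N K p t = p 1 ^ N + (\<Sum>k=2..<t. zprob N p k / (\<Sum>j=k..K. p j))"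
  proof -
    have "{1..<t} = insert 1 {2..<t}" using t by auto
    then have "Gs N K p t = zprob N p 1 / (\<Sum>j=1..K. p j) + (\<Sum>k=2..<t. zprob N p k / (\<Sum>j=k..K. p j))"
      unfolding Gs_def by simp
    moreover have "zprob N p 1 = p 1 ^ N" unfolding zprob_def using N by simp
    moreover have "(\<Sum>j=1..K. p j) = 1" using vp unfolding valid_prob_def by simp
    ultimately show ?thesis by simp
  qed
  have "lam^N * Gs N K p t \<le> Gs N K q K" unfolding Gpt GqK distrib_left using B1 B2 by simp
  then show ?thesis using vq qK by simp
qed

lemma frac_cmp:
  fixes a b g c :: real
  assumes "a \<ge> 0" "g \<ge> 0" "b > 0" "c > 0" "a * c \<le> g * b"
  shows "a/(a+b) \<le> g/(g+c)"
proof -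
  have "a * (g + c) \<le> g * (a + b)" using assms by (simp add: algebra_simps)
  then show ?thesis using assms by (simp add: divide_simps)
qed

lemma lower_ELR:
  assumes vp: "valid_prob K p" and pK: "p K = u" and u: "u = 1/r" and r: "r > 1" and K: "K \<ge> 2"
  defines "x \<equiv> (\<lambda>i. if i = K then 1 else u / (\<Sum>j=i..K. p j))"
  shows "valid_vals r K x \<and> ELR N K x p = Gs N K p K / (Gs N K p K + (1-(1-u)^N)/u)"
proof -
  have u0: "u > 0" using u r by simp
  have T1: "(\<Sum>j=1..K. p j) = 1" using vp unfolding valid_prob_def by simp
  have Tstep: "(\<Sum>j=i..K. p j) = p i + (\<Sum>j=Suc i..K. p j)" if "i \<le> K" for i
    using sum.atLeast_Suc_atMost[OF that] by simp
  have Tpos: "(\<Sum>j=i..K. p j) > 0" if "1 \<le> i" "i \<le> K" for i using tail_pos[OF vp] that by simp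
  have TK: "(\<Sum>j=K..K. p j) = u" using pK by simp
  have vv: "valid_vals r K x" unfolding valid_vals_def
  proof (intro conjI ballI)
    show "0 < x 1" using K T1 u0 unfolding x_def by simp
    show "x K \<le> r * x 1" using K T1 u r unfolding x_def by simp
    fix i assume i: "i \<in> {1..<K}"
    have pi: "p i > 0" using vp i unfolding valid_prob_def by auto
    show "x i < x (Suc i)"
    proof (cases "Suc i = K")
      case True
      have "(\<Sum>j=i..K. p j) = p i + u" using Tstep[of i] i True TK by simp
      then show ?thesis using True i u0 pi unfolding x_def by (simp add: divide_simps)
    next
      case False
      have a: "(\<Sum>j=i..K. p j) = p i + (\<Sum>j=Suc i..K. p j)" using Tstep[of i] i by simp
      have b: "(\<Sum>j=Suc i..K. p j) > 0" using Tpos[of "Suc i"] i by simp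
      have "u / (\<Sum>j=i..K. p j) < u / (\<Sum>j=Suc i..K. p j)"
        using a b pi u0 by (intro divide_strict_left_mono) auto
      then show ?thesis using False i unfolding x_def by simp
    qed
  qed
  have rev: "revenue K x p k = u" if "k \<in> {1..K}" for k
    using that Tpos[of k] TK unfolding revenue_def x_def by auto
  have "{i \<in> {1..K}. \<forall>k\<in>{1..K}. revenue K x p k \<le> revenue K x p i} = {1..K}"
    using rev by auto
  moreover have "Max {1..K} = K" using K by (intro Max_eqI) auto
  ultimately have tK: "reserve_index K x p = K" unfolding reserve_index_def by simp
  have num: "(\<Sum>i=1..<K. zprob N p i * x i) = u * Gs N K p K"
    unfolding Gs_def sum_distrib_left x_def by (intro sum.cong) auto
  have zK: "zprob N p K = 1 - (1-u)^N"
  proof -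
    have "Lm p K = 1 - u" using tail_eq[OF vp, of K] TK K by simp
    then show ?thesis unfolding zprob_Lm using Lm_top[OF vp] by simp
  qed
  have den: "(\<Sum>i=1..K. zprob N p i * x i) = u * Gs N K p K + (1 - (1-u)^N)"
  proof -
    have "{1..K} = insert K {1..<K}" using K by auto
    then show ?thesis using num zK unfolding x_def by simp
  qed
  have "ELR N K x p = u * Gs N K p K / (u * Gs N K p K + (1 - (1-u)^N))"
    unfolding ELR_def tK den num by simp
  also have "\<dots> = Gs N K p K / (Gs N K p K + (1-(1-u)^N)/u)"
  proof -
    have "Gs N K p K + (1-(1-u)^N)/u = (u * Gs N K p K + (1 - (1-u)^N)) / u"
      using u0 by (simp add: field_simps)
    then show ?thesis using u0 by simp
  qed
  finally show ?thesis using vv by simp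
qed

lemma Gs_bound: assumes vp: "valid_prob K p" and pK: "p K = u" and u: "u > 0" and K: "K \<ge> 1"
  shows "0 \<le> Gs N K p K \<and> Gs N K p K \<le> 1/u"
proof -
  have "Gs N K p K \<le> (\<Sum>i=1..<K. zprob N p i / u)" unfolding Gs_def
  proof (intro sum_mono divide_left_mono)
    fix i assume i: "i \<in> {1..<K}"
    show "zprob N p i \<ge> 0" using zprob_nonneg[OF vp] i by simp
    have "Lm p i \<le> Lm p K" using Lm_mono[OF vp] i by simp
    moreover have "Lm p K = 1 - u" using tail_eq[OF vp, of K] pK K by simp
    ultimately show "u \<le> (\<Sum>j=i..K. p j)" using tail_eq[OF vp, of i] i by simp
    show "0 < (\<Sum>j=i..K. p j) * u" using tail_pos[OF vp, of i] i u by simp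
  qed
  also have "\<dots> = (Lm p K ^ N - Lm p 1 ^ N) / u"
    using zprob_tele[of 1 K N p] K by (simp add: sum_divide_distrib[symmetric])
  also have "\<dots> \<le> 1 / u"
  proof -
    have "Lm p K \<le> 1" "Lm p K \<ge> 0" using Lm_mono[OF vp, of K "Suc K"] Lm_top[OF vp] Lm_nonneg[OF vp, of K] by auto
    then have "Lm p K ^ N \<le> 1" by (simp add: power_le_one)
    moreover have "Lm p 1 ^ N \<ge> 0" using Lm_1 by simp
    ultimately show ?thesis using u by (intro divide_right_mono) auto
  qed
  finally show ?thesis unfolding Gs_def using K
    by (auto intro!: sum_nonneg divide_nonneg_pos zprob_nonneg[OF vp] tail_pos[OF vp])
qed

theorem proposition6:
  fixes r :: real and K N :: nat
  assumes "r > 1" and "N \<ge> 1" and "K \<ge> 2"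
  shows "eta r K N = gamma_star r K N /
           ((r ^ N - (r - 1) ^ N) / r ^ (N - 1) + gamma_star r K N)"
proof -
  note r = assms(1) and N = assms(2) and K = assms(3)
  define u where "u = 1/r"
  have u0: "0 < u" "u < 1" using r unfolding u_def by auto
  define c where "c = (1 - (1-u)^N) / u"
  have c_eq: "(r ^ N - (r - 1) ^ N) / r ^ (N - 1) = c"
  proof -
    have rN: "r ^ N = r * r^(N-1)" using N by (simp add: power_eq_if)
    have rN0: "r^(N-1) > 0" using r by simp
    have "(1-u) = (r-1)/r" unfolding u_def using r by (simp add: diff_divide_distrib)
    then have "(1-u)^N = (r-1)^N / r^N" by (simp add: power_divide)
    then have "c = (1 - (r-1)^N / r^N) * r" unfolding c_def u_def by simp
    also have "\<dots> = ((r^N - (r-1)^N) / r^N) * r" using r by (simp add: diff_divide_distrib)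
    also have "\<dots> = (r ^ N - (r - 1) ^ N) / r ^ (N - 1)" unfolding rN using r rN0 by simp
    finally show ?thesis by simp
  qed
  have Dpos: "1 - (1-u)^N > 0"
  proof -
    have "(1-u)^N \<le> (1-u)^1" using N u0 by (intro power_decreasing) auto
    then show ?thesis using u0 by simp
  qed
  have c0: "c > 0" unfolding c_def using Dpos u0 by simp
  define GS where "GS = {Gs N K p K | p. valid_prob K p \<and> p K = u}"
  have gs: "gamma_star r K N = Sup GS"
  proof -
    have "{1..K-1} = {1..<K}" using K by auto
    then show ?thesis unfolding gamma_star_def GS_def Gs_def u_def by simp
  qed
  define \<Gamma> where "\<Gamma> = Sup GS"
  define p0 where "p0 = (\<lambda>j::nat. if j < K then (1-u)/real (K-1) else u)"
  have vp0: "valid_prob K p0" unfolding valid_prob_def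
  proof
    show "\<forall>i\<in>{1..K}. 0 < p0 i" using u0 K unfolding p0_def by auto
    have "{1..K} = insert K {1..<K}" using K by auto
    then have "(\<Sum>i=1..K. p0 i) = u + (\<Sum>i=1..<K. (1-u)/real (K-1))" unfolding p0_def by simp
    also have "\<dots> = 1" using K by simp
    finally show "(\<Sum>i=1..K. p0 i) = 1" .
  qed
  have p0K: "p0 K = u" unfolding p0_def by simp
  have GSne: "GS \<noteq> {}" using vp0 p0K unfolding GS_def by blast
  have GSbdd: "bdd_above GS" unfolding GS_def bdd_above_def
    using Gs_bound u0 K by (intro exI[of _ "1/u"]) force
  have G0: "\<Gamma> \<ge> 0"
  proof -
    have "Gs N K p0 K \<in> GS" using vp0 p0K unfolding GS_def by blast
    then have "Gs N K p0 K \<le> \<Gamma>" unfolding \<Gamma>_def using GSbdd by (rule cSup_upper)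
    moreover have "Gs N K p0 K \<ge> 0" using Gs_bound[OF vp0 p0K u0(1)] K by simp
    ultimately show ?thesis by simp
  qed
  have Gle: "g \<le> \<Gamma>" if "g \<in> GS" for g unfolding \<Gamma>_def using that GSbdd by (rule cSup_upper)
  define ES where "ES = {ELR N K x p | x p. valid_prob K p \<and> valid_vals r K x}"
  have eta_eq: "eta r K N = Sup ES" unfolding eta_def ES_def by simp
  have upper: "ELR N K x p \<le> \<Gamma> / (\<Gamma> + c)" if vp: "valid_prob K p" and vv: "valid_vals r K x" for x p
  proof -
    define t where "t = reserve_index K x p"
    define s where "s = (\<Sum>j=t..K. p j)"
    have B: "1 \<le> t \<and> t \<le> K \<and> 1/r \<le> s \<and> s \<le> 1 \<and> s = 1 - Lm p t \<and> Gs N K p t \<ge> 0 \<and>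
     ELR N K x p \<le> s * Gs N K p t / (s * Gs N K p t + (1 - (1-s)^N))"
      using upper_B[OF vp vv r N K] unfolding t_def s_def by blast
    have us: "u \<le> s" using B unfolding u_def by simp
    have Ds: "1 - (1-s)^N > 0"
    proof -
      have "(1-s)^N \<le> (1-s)^1" using N us u0 B by (intro power_decreasing) auto
      then show ?thesis using us u0 by simp
    qed
    show ?thesis
    proof (cases "t = 1")
      case True
      then have "Gs N K p t = 0" unfolding Gs_def by simp
      then have "ELR N K x p \<le> 0" using B by simp
      also have "0 \<le> \<Gamma> / (\<Gamma> + c)" using G0 c0 by simp
      finally show ?thesis .
    next
      case False
      then have t2: "2 \<le> t" using B by simp
      have "Lm p t \<ge> Lm p 2" using Lm_mono[OF vp, of 2 t] t2 B by simp
      moreover have "Lm p 2 = p 1" using Lm_Suc[of 1 p] Lm_1 by (simp add: numeral_2_eq_2)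
      moreover have "p 1 > 0" using vp K unfolding valid_prob_def by auto
      ultimately have s1: "s < 1" using B by simp
      define lam where "lam = (1-u)/(1-s)"
      obtain q where q: "valid_prob K q" "q K = u" "Gs N K q K \<ge> lam^N * Gs N K p t"
        using construct[OF vp t2 _ u0(1) us s1 _ N] B unfolding lam_def by blast
      have "Gs N K q K \<in> GS" using q unfolding GS_def by blast
      then have qG: "lam^N * Gs N K p t \<le> \<Gamma>" using Gle q by fastforce
      have psi: "(1 - (1-u)^N) * s * (1-s)^N \<le> u * (1 - (1-s)^N) * (1-u)^N"
        using psi_ineq[of "1-s" "1-u" N] us u0 B by simp
      have cs: "s * c * (1-s)^N = ((1 - (1-u)^N) * s * (1-s)^N) / u" unfolding c_def by simp
      have "s * c * (1-s)^N \<le> (u * (1 - (1-s)^N) * (1-u)^N) / u"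
        unfolding cs using psi u0 by (intro divide_right_mono) auto
      also have "\<dots> = (1 - (1-s)^N) * (1-u)^N" using u0 by simp
      finally have sc0: "s * c * (1-s)^N \<le> (1 - (1-s)^N) * (1-u)^N" .
      have ps: "(1-s)^N > 0" using s1 by simp
      have "s * c \<le> (1 - (1-s)^N) * (1-u)^N / (1-s)^N"
        using sc0 ps by (simp add: pos_le_divide_eq)
      then have sc: "s * c \<le> (1 - (1-s)^N) * lam^N"
        unfolding lam_def power_divide by simp
      have "(s * Gs N K p t) * c = Gs N K p t * (s * c)" by simp
      also have "\<dots> \<le> Gs N K p t * ((1 - (1-s)^N) * lam^N)"
        using sc B by (intro mult_left_mono) auto
      also have "\<dots> = (lam^N * Gs N K p t) * (1 - (1-s)^N)" by simp
      also have "\<dots> \<le> \<Gamma> * (1 - (1-s)^N)" using qG Ds by (intro mult_right_mono) auto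
      finally have key: "(s * Gs N K p t) * c \<le> \<Gamma> * (1 - (1-s)^N)" .
      have "s * Gs N K p t / (s * Gs N K p t + (1 - (1-s)^N)) \<le> \<Gamma> / (\<Gamma> + c)"
        using key B Ds c0 G0 us u0 by (intro frac_cmp) auto
      then show ?thesis using B by linarith
    qed
  qed
  obtain x0 where "valid_vals r K x0"
    using lower_ELR[OF vp0 p0K u_def r K] by blast
  then have ESne: "ES \<noteq> {}" using vp0 unfolding ES_def by blast
  have ESbdd: "bdd_above ES" unfolding bdd_above_def ES_def using upper by blast
  have eta_le: "Sup ES \<le> \<Gamma> / (\<Gamma> + c)"
    using ESne upper unfolding ES_def by (intro cSup_least) auto
  have eta_lt1: "Sup ES < 1"
  proof -
    have "\<Gamma> / (\<Gamma> + c) < 1" using G0 c0 by simp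
    then show ?thesis using eta_le by simp
  qed
  have lowG: "g * (1 - Sup ES) \<le> Sup ES * c" if "g \<in> GS" for g
  proof -
    obtain p where p: "valid_prob K p" "p K = u" "g = Gs N K p K" using \<open>g \<in> GS\<close> unfolding GS_def by blast
    obtain x where x: "valid_vals r K x" "ELR N K x p = g / (g + c)"
      using lower_ELR[OF p(1) p(2) u_def r K, of N] p(3) unfolding c_def by blast
    have "g / (g + c) \<in> ES" using x p unfolding ES_def by force
    then have "g / (g + c) \<le> Sup ES" using ESbdd by (rule cSup_upper)
    moreover have "g \<ge> 0" using Gs_bound[OF p(1) p(2) u0(1)] K p(3) by simp
    ultimately have "g \<le> Sup ES * (g + c)" using c0 by (simp add: divide_simps)
    then show ?thesis by (simp add: algebra_simps)
  qed
  have "\<Gamma> \<le> Sup ES * c / (1 - Sup ES)" unfolding \<Gamma>_def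
    using GSne lowG eta_lt1 by (intro cSup_least) (auto simp: divide_simps)
  then have "\<Gamma> * (1 - Sup ES) \<le> Sup ES * c" using eta_lt1 by (simp add: divide_simps)
  then have "\<Gamma> \<le> Sup ES * (\<Gamma> + c)" by (simp add: algebra_simps)
  then have "\<Gamma> / (\<Gamma> + c) \<le> Sup ES" using G0 c0 by (simp add: divide_simps)
  then have "Sup ES = \<Gamma> / (\<Gamma> + c)" using eta_le by simp
  then show ?thesis unfolding eta_eq c_eq gs \<Gamma>_def by (simp add: add.commute)
qed

end
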